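(* Let $A$ and $B$ be self-adjoint operators on the same complex Hilbert space, and suppose that $B$ is bounded and non-negative. If $\sigma(A + tB) = \sigma(A)$ for all $t \in \mathbb{R}$, then $B = 0$ or $\sigma(A) = \mathbb{R}$.
   Context: $\sigma(T)$ denotes the spectrum of an operator $T$. $A$ may be unbounded; $A+tB$ is defined on the domain of $A$. *)

theory Defs
  imports Complex_Main
begin

text \<open>A complex Hilbert space is modelled by a carrier type 'a (an abelian group),
  a complex scalar multiplication scl and an inner product ip that is linear in the
  first argument and conjugate-linear in the second, positive definite, and complete
  for the induced norm.\<close>

definition hnorm :: "('a \<Rightarrow> 'a \<Rightarrow> complex) \<Rightarrow> 'a \<Rightarrow> real" where
  "hnorm ip x = sqrt (Re (ip x x))"

definition complex_hilbert_space ::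
  "(complex \<Rightarrow> 'a::ab_group_add \<Rightarrow> 'a) \<Rightarrow> ('a \<Rightarrow> 'a \<Rightarrow> complex) \<Rightarrow> bool" where
  "complex_hilbert_space scl ip \<longleftrightarrow>
     vector_space scl \<and>
     (\<forall>a x y z. ip (scl a x + y) z = a * ip x z + ip y z) \<and>
     (\<forall>x y. ip x y = cnj (ip y x)) \<and>
     (\<forall>x. 0 \<le> Re (ip x x)) \<and>
     (\<forall>x. ip x x = 0 \<longrightarrow> x = 0) \<and>
     (\<forall>f :: nat \<Rightarrow> 'a.
        (\<forall>e>0. \<exists>N. \<forall>m\<ge>N. \<forall>n\<ge>N. hnorm ip (f m - f n) < e) \<longrightarrow>
        (\<exists>x. \<forall>e>0. \<exists>N. \<forall>n\<ge>N. hnorm ip (f n - x) < e))"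

definition linear_op_on ::
  "(complex \<Rightarrow> 'a::ab_group_add \<Rightarrow> 'a) \<Rightarrow> 'a set \<Rightarrow> ('a \<Rightarrow> 'a) \<Rightarrow> bool" where
  "linear_op_on scl D T \<longleftrightarrow>
     0 \<in> D \<and> (\<forall>x\<in>D. \<forall>y\<in>D. x + y \<in> D) \<and> (\<forall>a. \<forall>x\<in>D. scl a x \<in> D) \<and>
     (\<forall>x\<in>D. \<forall>y\<in>D. T (x + y) = T x + T y) \<and> (\<forall>a. \<forall>x\<in>D. T (scl a x) = scl a (T x))"

text \<open>Self-adjoint operator: densely defined, linear, and equal to its adjoint
  (symmetric, and the adjoint's domain is contained in D with A* = A there).\<close>

definition self_adjoint_op ::
  "(complex \<Rightarrow> 'a::ab_group_add \<Rightarrow> 'a) \<Rightarrow> ('a \<Rightarrow> 'a \<Rightarrow> complex) \<Rightarrow> 'a set \<Rightarrow> ('a \<Rightarrow> 'a) \<Rightarrow> bool" where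
  "self_adjoint_op scl ip D A \<longleftrightarrow>
     linear_op_on scl D A \<and>
     (\<forall>x. \<forall>e>0. \<exists>y\<in>D. hnorm ip (x - y) < e) \<and>
     (\<forall>x\<in>D. \<forall>y\<in>D. ip (A x) y = ip x (A y)) \<and>
     (\<forall>y z. (\<forall>x\<in>D. ip (A x) y = ip x z) \<longrightarrow> y \<in> D \<and> A y = z)"

definition bounded_op ::
  "('a::ab_group_add \<Rightarrow> 'a \<Rightarrow> complex) \<Rightarrow> ('a \<Rightarrow> 'a) \<Rightarrow> bool" where
  "bounded_op ip B \<longleftrightarrow> (\<exists>C. \<forall>x. hnorm ip (B x) \<le> C * hnorm ip x)"

definition nonneg_op ::
  "('a::ab_group_add \<Rightarrow> 'a \<Rightarrow> complex) \<Rightarrow> ('a \<Rightarrow> 'a) \<Rightarrow> bool" where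
  "nonneg_op ip B \<longleftrightarrow> (\<forall>x. Im (ip (B x) x) = 0 \<and> 0 \<le> Re (ip (B x) x))"

definition op_spectrum ::
  "(complex \<Rightarrow> 'a::ab_group_add \<Rightarrow> 'a) \<Rightarrow> ('a \<Rightarrow> 'a \<Rightarrow> complex) \<Rightarrow> 'a set \<Rightarrow> ('a \<Rightarrow> 'a) \<Rightarrow> complex set" where
  "op_spectrum scl ip D T =
     {l. \<not> (bij_betw (\<lambda>x. scl l x - T x) D UNIV \<and>
            (\<exists>C. \<forall>y. hnorm ip (the_inv_into D (\<lambda>x. scl l x - T x) y) \<le> C * hnorm ip y))}"

end

theory Submission
  imports Defs
begin


locale chs =
  fixes scl :: "complex \<Rightarrow> 'a::ab_group_add \<Rightarrow> 'a" and ip :: "'a \<Rightarrow> 'a \<Rightarrow> complex"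
  assumes H: "complex_hilbert_space scl ip"

sublocale chs \<subseteq> vs: vector_space scl
  using H unfolding complex_hilbert_space_def by blast

context chs begin

abbreviation nr where "nr \<equiv> hnorm ip"

lemma ip_lin: "ip (scl a x + y) z = a * ip x z + ip y z"
  using H unfolding complex_hilbert_space_def by blast
lemma ip_conj: "ip x y = cnj (ip y x)"
  using H unfolding complex_hilbert_space_def by blast
lemma ip_pos: "0 \<le> Re (ip x x)"
  using H unfolding complex_hilbert_space_def by blast
lemma ip_def0: "ip x x = 0 \<Longrightarrow> x = 0"
  using H unfolding complex_hilbert_space_def by blast
lemma complete: "(\<forall>e>0. \<exists>N. \<forall>m\<ge>N. \<forall>n\<ge>N. nr ((f::nat\<Rightarrow>'a) m - f n) < e) \<Longrightarrow>
        (\<exists>x. \<forall>e>0. \<exists>N. \<forall>n\<ge>N. nr (f n - x) < e)"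
proof -
  assume a: "\<forall>e>0. \<exists>N. \<forall>m\<ge>N. \<forall>n\<ge>N. nr (f m - f n) < e"
  have "\<forall>f :: nat \<Rightarrow> 'a.
        (\<forall>e>0. \<exists>N. \<forall>m\<ge>N. \<forall>n\<ge>N. hnorm ip (f m - f n) < e) \<longrightarrow>
        (\<exists>x. \<forall>e>0. \<exists>N. \<forall>n\<ge>N. hnorm ip (f n - x) < e)"
    using H unfolding complex_hilbert_space_def by (elim conjE)
  thus ?thesis using a by blast
qed

lemma ip_add1: "ip (x + y) z = ip x z + ip y z"
  using ip_lin[of 1 x y z] by simp
lemma ip_zero1[simp]: "ip 0 z = 0"
  using ip_add1[of 0 0 z] by simp
lemma ip_scl1: "ip (scl a x) z = a * ip x z"
  using ip_lin[of a x 0 z] by simp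
lemma ip_minus1: "ip (- x) z = - ip x z"
  using ip_scl1[of "-1" x z] by simp
lemma ip_diff1: "ip (x - y) z = ip x z - ip y z"
  using ip_add1[of x "-y" z] ip_minus1 by simp
lemma ip_add2: "ip z (x + y) = ip z x + ip z y"
  by (metis ip_conj ip_add1 complex_cnj_add)
lemma ip_scl2: "ip z (scl a x) = cnj a * ip z x"
  by (metis ip_conj ip_scl1 complex_cnj_mult)
lemma ip_zero2[simp]: "ip z 0 = 0"
  by (metis ip_conj ip_zero1 complex_cnj_zero)
lemma ip_minus2: "ip z (- x) = - ip z x"
  by (metis ip_conj ip_minus1 complex_cnj_minus)
lemma ip_diff2: "ip z (x - y) = ip z x - ip z y"
  by (metis ip_conj ip_diff1 complex_cnj_diff)
lemma ip_self_Im: "Im (ip x x) = 0"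
proof -
  have "Im (ip x x) = Im (cnj (ip x x))" using ip_conj[of x x] by metis
  thus ?thesis by simp
qed

lemma ip_self_real: "ip x x = of_real (Re (ip x x))"
  using ip_self_Im by (simp add: complex_eq_iff)
lemma nr_sq: "(nr x)^2 = Re (ip x x)"
  unfolding hnorm_def using ip_pos[of x] by simp
lemma nr_ge0[simp]: "0 \<le> nr x"
  unfolding hnorm_def using ip_pos[of x] by simp
lemma ip_self_nr: "ip x x = of_real ((nr x)^2)"
  using ip_self_real nr_sq by metis
lemma nr_zero_iff[simp]: "nr x = 0 \<longleftrightarrow> x = 0"
proof
  assume "nr x = 0" then have "ip x x = 0" using ip_self_nr by simp
  thus "x = 0" using ip_def0 by blast
qed (simp add: hnorm_def)
lemma nr_zero[simp]: "nr 0 = 0" by simp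

lemma form_cs:
  fixes p :: "'a \<Rightarrow> 'a \<Rightarrow> complex"
  assumes add: "\<And>x y z. p (x + y) z = p x z + p y z"
    and sc: "\<And>a x z. p (scl a x) z = a * p x z"
    and herm: "\<And>x y. p x y = cnj (p y x)"
    and pos: "\<And>x. 0 \<le> Re (p x x)"
  shows "(cmod (p x y))^2 \<le> Re (p x x) * Re (p y y)"
proof -
  have add2: "\<And>x y z. p z (x + y) = p z x + p z y"
    by (metis herm add complex_cnj_add)
  have sc2: "\<And>a x z. p z (scl a x) = cnj a * p z x"
    by (metis herm sc complex_cnj_mult)
  have realp: "\<And>x. p x x = of_real (Re (p x x))"
  proof -
    fix x have "Im (p x x) = Im (cnj (p x x))" using herm[of x x] by metis
    thus "p x x = of_real (Re (p x x))" by (simp add: complex_eq_iff)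
  qed
  define w where "w = p x y"
  have pyx: "p y x = cnj w" unfolding w_def using herm by metis
  have key: "0 \<le> Re (p x x) - 2*s*(cmod w)^2 + s^2*(cmod w)^2 * Re (p y y)" for s :: real
  proof -
    define b where "b = - (of_real s) * w"
    have "p (x + scl b y) (x + scl b y) = p x x + cnj b * p x y + b * p y x + b * cnj b * p y y"
      by (simp add: add add2 sc sc2 algebra_simps)
    also have "... = p x x - 2 * of_real s * w * cnj w + (of_real s)^2 * (w * cnj w) * p y y"
      unfolding b_def pyx w_def[symmetric] by (simp add: algebra_simps power2_eq_square)
    also have "... = of_real (Re (p x x) - 2*s*(cmod w)^2 + s^2*(cmod w)^2 * Re (p y y))"
      apply (subst realp[of x], subst realp[of y])
      by (simp add: complex_norm_square[symmetric] algebra_simps)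
    finally show ?thesis using pos[of "x + scl b y"] by simp
  qed
  show ?thesis
  proof (cases "w = 0")
    case True thus ?thesis using pos[of x] pos[of y] unfolding w_def by simp
  next
    case False
    hence w0: "(cmod w)^2 > 0" by simp
    show ?thesis
    proof (cases "Re (p y y) = 0")
      case True
      have "0 \<le> Re (p x x) - 2*((Re (p x x) + 1)/(2*(cmod w)^2))*(cmod w)^2"
        using key[of "(Re (p x x) + 1)/(2*(cmod w)^2)"] True by simp
      also have "... = -1" using w0 by (simp add: field_simps)
      finally show ?thesis by simp
    next
      case False
      hence r: "Re (p y y) > 0" using pos[of y] by simp
      have "0 \<le> Re (p x x) - 2*(1/Re (p y y))*(cmod w)^2 + (1/Re (p y y))^2*(cmod w)^2 * Re (p y y)"
        using key by blast
      also have "... = Re (p x x) - (cmod w)^2 / Re (p y y)"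
        using r by (simp add: field_simps power2_eq_square)
      finally have "(cmod w)^2 / Re (p y y) \<le> Re (p x x)" by simp
      thus ?thesis unfolding w_def using r by (simp add: field_simps)
    qed
  qed
qed

end

context chs begin
lemma cs: "cmod (ip x y) \<le> nr x * nr y"
proof -
  have "(cmod (ip x y))^2 \<le> (nr x * nr y)^2"
    using form_cs[of ip, OF ip_add1 ip_scl1 ip_conj ip_pos] by (simp add: nr_sq power_mult_distrib)
  thus ?thesis by (rule power2_le_imp_le) simp
qed

lemma nr_add_sq: "(nr (x + y))^2 = (nr x)^2 + (nr y)^2 + 2 * Re (ip x y)"
proof -
  have "Re (ip y x) = Re (ip x y)" using ip_conj[of y x] by simp
  thus ?thesis unfolding nr_sq by (simp add: ip_add1 ip_add2)
qed

lemma nr_triangle: "nr (x + y) \<le> nr x + nr y"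
proof -
  have "Re (ip x y) \<le> nr x * nr y" using cs[of x y] complex_Re_le_cmod order_trans by blast
  hence "(nr (x + y))^2 \<le> (nr x + nr y)^2" unfolding nr_add_sq by (simp add: power2_eq_square algebra_simps)
  thus ?thesis using power2_le_imp_le by fastforce
qed

lemma nr_scl: "nr (scl a x) = cmod a * nr x"
proof -
  have "(nr (scl a x))^2 = (cmod a * nr x)^2"
  proof -
    have "ip (scl a x) (scl a x) = (a * cnj a) * ip x x" by (simp add: ip_scl1 ip_scl2)
    also have "... = of_real ((cmod a)^2 * (nr x)^2)"
      by (simp add: complex_norm_square[symmetric] ip_self_nr[of x])
    finally show ?thesis unfolding nr_sq power_mult_distrib by simp
  qed
  thus ?thesis by (simp add: power2_eq_iff_nonneg)
qed

lemma nr_minus: "nr (- x) = nr x"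
  using nr_scl[of "-1" x] by simp
lemma nr_commute: "nr (x - y) = nr (y - x)"
  using nr_minus[of "x - y"] by simp
lemma nr_diff_triangle: "nr (x - z) \<le> nr (x - y) + nr (y - z)"
  using nr_triangle[of "x - y" "y - z"] by simp
lemma nr_diff_ge: "nr x - nr y \<le> nr (x - y)"
proof -
  have "nr (x - y + y) \<le> nr (x - y) + nr y" by (rule nr_triangle)
  thus ?thesis by (simp del: nr_triangle)
qed
lemma nr_diff_le: "nr (x - y) \<le> nr x + nr y"
proof -
  have "nr (x + - y) \<le> nr x + nr (- y)" by (rule nr_triangle)
  thus ?thesis by (simp add: nr_minus del: nr_triangle)
qed
lemma nr_parallelogram: "(nr (x + y))^2 + (nr (x - y))^2 = 2 * (nr x)^2 + 2 * (nr y)^2"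
proof -
  have "(nr (x + - y))^2 = (nr x)^2 + (nr (- y))^2 + 2 * Re (ip x (- y))" by (rule nr_add_sq)
  hence B: "(nr (x - y))^2 = (nr x)^2 + (nr y)^2 - 2 * Re (ip x y)"
    by (simp only: nr_minus ip_minus2 diff_conv_add_uminus[symmetric] uminus_complex.sel)
  show ?thesis unfolding B nr_add_sq[of x y] by simp
qed

end


lemma cmod_small_zero: "(\<And>e. e > 0 \<Longrightarrow> cmod (a::complex) < e) \<Longrightarrow> a = 0"
  by (metis less_irrefl zero_less_norm_iff)

lemma half_bound: "0 < (e::real) \<Longrightarrow> 0 \<le> a \<Longrightarrow> a * (e / (2*(a+1))) < e/2"
proof -
  assume e: "0 < e" and a: "0 \<le> a"
  have "a * (e / (2*(a+1))) = (e/2) * (a/(a+1))" by (simp add: field_simps)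
  also have "... < (e/2) * 1" using e a by (intro mult_strict_left_mono) auto
  finally show ?thesis by simp
qed

lemma real_small_le: "(\<And>e. e > 0 \<Longrightarrow> (r::real) < d + e) \<Longrightarrow> r \<le> d"
  by (metis add.commute field_le_epsilon less_eq_real_def)

context chs begin

definition conv :: "(nat \<Rightarrow> 'a) \<Rightarrow> 'a \<Rightarrow> bool" where
  "conv f x \<longleftrightarrow> (\<forall>e>0. \<exists>N. \<forall>n\<ge>N. nr (f n - x) < e)"

lemma cauchy_crit:
  fixes g :: "nat \<Rightarrow> 'a"
  assumes K: "\<And>j k. (nr (g j - g k))^2 \<le> K * (1/(real j+1) + 1/(real k+1))"
  shows "\<exists>x. conv g x"
proof -
  have "\<forall>e>0. \<exists>N. \<forall>m\<ge>N. \<forall>n\<ge>N. nr (g m - g n) < e"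
  proof (intro allI impI)
    fix e :: real assume e: "e > 0"
    obtain N :: nat where N: "(\<bar>K\<bar> * 2 + 1) / e^2 < real N" using reals_Archimedean2 by blast
    have Npos: "real N > 0" using N e by (smt (verit, best) divide_pos_pos zero_less_power abs_ge_zero)
    have "\<bar>K\<bar> * 2 / (real N + 1) < e^2"
    proof -
      have "\<bar>K\<bar> * 2 + 1 < e^2 * real N" using N e by (simp add: field_simps)
      moreover have "e^2 > 0" using e by simp
      ultimately have "\<bar>K\<bar> * 2 < e^2 * (real N + 1)" unfolding distrib_left mult_1_right by linarith
      thus ?thesis using Npos by (simp add: field_simps)
    qed
    show "\<exists>N. \<forall>m\<ge>N. \<forall>n\<ge>N. nr (g m - g n) < e"
    proof (intro exI allI impI)
      fix m n assume m: "m \<ge> N" and n: "n \<ge> N"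
      have a: "1/(real m+1) \<le> 1/(real N+1)" using m by (simp add: frac_le)
      have b: "1/(real n+1) \<le> 1/(real N+1)" using n by (simp add: frac_le)
      have "(nr (g m - g n))^2 \<le> \<bar>K\<bar> * (1/(real m+1) + 1/(real n+1))"
        using K[of m n] by (smt (verit, ccfv_SIG) abs_ge_self divide_nonneg_nonneg mult_right_mono of_nat_0_le_iff)
      also have "... \<le> \<bar>K\<bar> * (2/(real N+1))" using a b by (intro mult_left_mono) auto
      also have "... < e^2" using \<open>\<bar>K\<bar> * 2 / (real N + 1) < e^2\<close> by simp
      finally show "nr (g m - g n) < e" using e by (smt (verit) nr_ge0 power_mono)
    qed
  qed
  thus ?thesis using complete[of g] unfolding conv_def by blast
qed

end

locale saop = chs scl ip for scl :: "complex \<Rightarrow> 'a::ab_group_add \<Rightarrow> 'a" and ip +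
  fixes D :: "'a set" and A :: "'a \<Rightarrow> 'a"
  assumes sa: "self_adjoint_op scl ip D A"
begin

lemma D0: "0 \<in> D" and Dadd: "x \<in> D \<Longrightarrow> y \<in> D \<Longrightarrow> x + y \<in> D"
  and Dscl: "x \<in> D \<Longrightarrow> scl a x \<in> D"
  and Aadd: "x \<in> D \<Longrightarrow> y \<in> D \<Longrightarrow> A (x + y) = A x + A y"
  and Ascl: "x \<in> D \<Longrightarrow> A (scl a x) = scl a (A x)"
  and Asym: "x \<in> D \<Longrightarrow> y \<in> D \<Longrightarrow> ip (A x) y = ip x (A y)"
  and Aadj: "(\<And>x. x \<in> D \<Longrightarrow> ip (A x) y = ip x w) \<Longrightarrow> y \<in> D \<and> A y = w"
  using sa unfolding self_adjoint_op_def linear_op_on_def by blast+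

lemma Dminus: "x \<in> D \<Longrightarrow> - x \<in> D"
  using Dscl[of x "-1"] by simp
lemma Ddiff: "x \<in> D \<Longrightarrow> y \<in> D \<Longrightarrow> x - y \<in> D"
  using Dadd[of x "-y"] Dminus by simp
lemma Aminus: "x \<in> D \<Longrightarrow> A (- x) = - A x"
  using Ascl[of x "-1"] by simp
lemma Adiff: "x \<in> D \<Longrightarrow> y \<in> D \<Longrightarrow> A (x - y) = A x - A y"
  using Aadd[of x "-y"] Aminus Dminus by simp

lemma A_closed:
  assumes xs: "\<And>k. xs k \<in> D" and cx: "conv xs x" and ch: "conv (\<lambda>k. A (xs k)) h"
  shows "x \<in> D \<and> A x = h"
proof (rule Aadj)
  fix w assume w: "w \<in> D"
  show "ip (A w) x = ip w h"
  proof -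
    have "ip (A w) x - ip w h = 0"
    proof (rule cmod_small_zero)
      fix e :: real assume e: "e > 0"
      define e1 where "e1 = e / (2 * (nr (A w) + 1))"
      define e2 where "e2 = e / (2 * (nr w + 1))"
      have e1: "e1 > 0" and e2: "e2 > 0" unfolding e1_def e2_def using e by (auto intro!: divide_pos_pos add_nonneg_pos)
      obtain N1 where N1: "\<forall>n\<ge>N1. nr (xs n - x) < e1" using cx e1 unfolding conv_def by blast
      obtain N2 where N2: "\<forall>n\<ge>N2. nr (A (xs n) - h) < e2" using ch e2 unfolding conv_def by blast
      define k where "k = max N1 N2"
      have k1: "nr (xs k - x) < e1" and k2: "nr (A (xs k) - h) < e2" using N1 N2 unfolding k_def by auto
      have eq: "ip (A w) x - ip w h = ip w (A (xs k) - h) - ip (A w) (xs k - x)"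
        using Asym[OF w xs[of k]] by (simp add: ip_diff2)
      have "cmod (ip w (A (xs k) - h)) \<le> nr w * nr (A (xs k) - h)" by (rule cs)
      also have "... \<le> nr w * e2" using k2 by (simp add: mult_left_mono)
      also have "... < e / 2" unfolding e2_def using e by (intro half_bound) auto
      finally have a: "cmod (ip w (A (xs k) - h)) < e / 2" .
      have "cmod (ip (A w) (xs k - x)) \<le> nr (A w) * nr (xs k - x)" by (rule cs)
      also have "... \<le> nr (A w) * e1" using k1 by (simp add: mult_left_mono)
      also have "... < e / 2" unfolding e1_def using e by (intro half_bound) auto
      finally have b: "cmod (ip (A w) (xs k - x)) < e / 2" .
      show "cmod (ip (A w) x - ip w h) < e" unfolding eq
        using norm_triangle_ineq4[of "ip w (A (xs k) - h)" "ip (A w) (xs k - x)"] a b by linarith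
    qed
    thus ?thesis by simp
  qed
qed

end


context saop begin

lemma Tadd: "x \<in> D \<Longrightarrow> y \<in> D \<Longrightarrow> A (x + y) - scl z (x + y) = (A x - scl z x) + (A y - scl z y)"
  by (simp add: Aadd vs.scale_right_distrib algebra_simps)
lemma Tscl: "x \<in> D \<Longrightarrow> A (scl a x) - scl z (scl a x) = scl a (A x - scl z x)"
  by (simp add: Ascl vs.scale_right_diff_distrib mult.commute)
lemma Tdiff: "x \<in> D \<Longrightarrow> y \<in> D \<Longrightarrow> A (x - y) - scl z (x - y) = (A x - scl z x) - (A y - scl z y)"
  by (simp add: Adiff vs.scale_right_diff_distrib algebra_simps)

lemma scl_two: "scl 2 v = v + v"
  using vs.scale_left_distrib[of 1 1 v] by simp

lemma surj_T:
  assumes c: "c > 0" and lb: "\<And>x. x \<in> D \<Longrightarrow> c * nr x \<le> nr (A x - scl z x)"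
  and ker: "\<And>y. y \<in> D \<Longrightarrow> A y = scl (cnj z) y \<Longrightarrow> y = 0"
  shows "\<exists>x\<in>D. A x - scl z x = f"
proof -
  define T where "T = (\<lambda>x. A x - scl z x)"
  have Tadd': "\<And>x y. x \<in> D \<Longrightarrow> y \<in> D \<Longrightarrow> T (x + y) = T x + T y" unfolding T_def by (rule Tadd)
  have Tscl': "\<And>a x. x \<in> D \<Longrightarrow> T (scl a x) = scl a (T x)" unfolding T_def by (rule Tscl)
  have Tdiff': "\<And>x y. x \<in> D \<Longrightarrow> y \<in> D \<Longrightarrow> T (x - y) = T x - T y" unfolding T_def by (rule Tdiff)
  define S where "S = {nr (f - T x) | x. x \<in> D}"
  define d where "d = Inf S"
  have Sne: "S \<noteq> {}" unfolding S_def using D0 by blast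
  have bdd: "bdd_below S" unfolding S_def by (rule bdd_belowI[of _ 0]) auto
  have dle: "\<And>x. x \<in> D \<Longrightarrow> d \<le> nr (f - T x)" unfolding d_def
    by (rule cInf_lower[OF _ bdd]) (auto simp: S_def)
  have d0: "0 \<le> d" unfolding d_def by (rule cInf_greatest[OF Sne]) (auto simp: S_def)
  have "\<forall>k::nat. \<exists>x. x \<in> D \<and> nr (f - T x) < d + 1/(real k + 1)"
  proof
    fix k :: nat
    have "Inf S < d + 1/(real k + 1)" unfolding d_def by simp
    then obtain s where "s \<in> S" "s < d + 1/(real k + 1)" using cInf_lessD[OF Sne] by blast
    thus "\<exists>x. x \<in> D \<and> nr (f - T x) < d + 1/(real k + 1)" unfolding S_def by blast
  qed
  then obtain xs where xsD: "\<And>k. xs k \<in> D" and xsb: "\<And>k. nr (f - T (xs k)) < d + 1/(real k+1)"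
    by metis
  have sqb: "(nr (f - T (xs k)))^2 \<le> d^2 + (2*d+1) * (1/(real k+1))" for k
  proof -
    define u where "u = 1/(real k + 1)"
    have u0: "0 < u" and u1: "u \<le> 1" unfolding u_def by (auto simp: field_simps)
    have "(nr (f - T (xs k)))^2 \<le> (d + u)^2" using xsb[of k] unfolding u_def[symmetric]
      by (intro power_mono) auto
    also have "... = d^2 + 2*d*u + u*u" by (simp add: power2_eq_square algebra_simps)
    also have "... \<le> d^2 + 2*d*u + u" using u0 u1 by (simp add: mult_left_le)
    finally show ?thesis unfolding u_def[symmetric] by (simp add: algebra_simps)
  qed
  have cT: "(nr (T (xs j) - T (xs k)))^2 \<le> (2*(2*d+1)) * (1/(real j+1) + 1/(real k+1))" for j k
  proof -
    define u where "u = f - T (xs j)"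
    define v where "v = f - T (xs k)"
    define m where "m = scl (1/2) (xs j + xs k)"
    have mD: "m \<in> D" unfolding m_def using xsD by (intro Dscl Dadd)
    have "u + v = scl 2 (f - T m)"
    proof -
      have "T m = scl (1/2) (T (xs j) + T (xs k))" unfolding m_def
        using xsD by (simp add: Tscl' Tadd' Dadd)
      hence "scl 2 (f - T m) = scl 2 f - (T (xs j) + T (xs k))"
        by (simp add: vs.scale_right_diff_distrib)
      thus ?thesis unfolding u_def v_def scl_two by (simp add: algebra_simps)
    qed
    hence "nr (u + v) = 2 * nr (f - T m)" by (simp add: nr_scl)
    hence "nr (u + v) \<ge> 2 * d" using dle[OF mD] by simp
    hence uv: "(nr (u + v))^2 \<ge> 4 * d^2" using d0
      by (metis (no_types, lifting) mult_2 power2_eq_square power_mono zero_le_mult_iff zero_le_numeral four_x_squared mult.commute)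
    have "(nr (u - v))^2 = 2*(nr u)^2 + 2*(nr v)^2 - (nr (u+v))^2" using nr_parallelogram[of u v] by simp
    also have "... \<le> 2*(d^2 + (2*d+1) * (1/(real j+1))) + 2*(d^2 + (2*d+1) * (1/(real k+1))) - 4*d^2"
      using sqb[of j] sqb[of k] uv unfolding u_def v_def by (smt (verit))
    also have "... = (2*(2*d+1)) * (1/(real j+1) + 1/(real k+1))" by (simp add: algebra_simps)
    finally show ?thesis unfolding u_def v_def using nr_commute by (simp add: algebra_simps)
  qed
  have cx: "(nr (xs j - xs k))^2 \<le> (2*(2*d+1)/c^2) * (1/(real j+1) + 1/(real k+1))" for j k
  proof -
    have "c * nr (xs j - xs k) \<le> nr (T (xs j) - T (xs k))"
      using lb[of "xs j - xs k"] Ddiff[OF xsD xsD] Tdiff'[OF xsD xsD] unfolding T_def by simp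
    hence "(c * nr (xs j - xs k))^2 \<le> (nr (T (xs j) - T (xs k)))^2"
      using c by (intro power_mono) auto
    hence "c^2 * (nr (xs j - xs k))^2 \<le> (2*(2*d+1)) * (1/(real j+1) + 1/(real k+1))"
      using cT[of j k] by (simp add: power_mult_distrib)
    moreover have c2: "c^2 > 0" using c by simp
    ultimately have "(nr (xs j - xs k))^2 \<le> ((2*(2*d+1)) * (1/(real j+1) + 1/(real k+1))) / c^2"
      by (simp add: pos_le_divide_eq mult.commute)
    thus ?thesis by simp
  qed
  obtain g where g: "conv (\<lambda>k. T (xs k)) g" using cauchy_crit[of "\<lambda>k. T (xs k)", OF cT] by blast
  obtain x0 where x0: "conv xs x0" using cauchy_crit[of xs, OF cx] by blast
  have cA: "conv (\<lambda>k. A (xs k)) (g + scl z x0)"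
    unfolding conv_def
  proof (intro allI impI)
    fix e :: real assume e: "e > 0"
    define e2 where "e2 = e / (2 * (cmod z + 1))"
    have e2: "e2 > 0" unfolding e2_def using e by (auto intro!: divide_pos_pos add_nonneg_pos)
    obtain N1 where N1: "\<forall>n\<ge>N1. nr (T (xs n) - g) < e/2" using g e unfolding conv_def
      by (meson half_gt_zero)
    obtain N2 where N2: "\<forall>n\<ge>N2. nr (xs n - x0) < e2" using x0 e2 unfolding conv_def by blast
    show "\<exists>N. \<forall>n\<ge>N. nr (A (xs n) - (g + scl z x0)) < e"
    proof (intro exI allI impI)
      fix n assume n: "n \<ge> max N1 N2"
      have eq: "A (xs n) - (g + scl z x0) = (T (xs n) - g) + scl z (xs n - x0)"
        unfolding T_def by (simp add: vs.scale_right_diff_distrib algebra_simps)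
      have "nr (A (xs n) - (g + scl z x0)) \<le> nr (T (xs n) - g) + cmod z * nr (xs n - x0)"
        unfolding eq using nr_triangle nr_scl by metis
      also have "... < e/2 + e/2"
      proof (rule add_less_le_mono)
        show "nr (T (xs n) - g) < e/2" using N1 n by auto
        have "cmod z * nr (xs n - x0) \<le> cmod z * e2" using N2 n by (intro mult_left_mono) auto
        also have "... \<le> e/2" unfolding e2_def using half_bound[OF e, of "cmod z"]
          by (cases "z = 0") auto
        finally show "cmod z * nr (xs n - x0) \<le> e/2" .
      qed
      finally show "nr (A (xs n) - (g + scl z x0)) < e" by simp
    qed
  qed
  have x0D: "x0 \<in> D" and Ax0: "A x0 = g + scl z x0" using A_closed[OF xsD x0 cA] by auto
  have Tx0: "T x0 = g" unfolding T_def Ax0 by simp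
  have rd: "nr (f - T x0) \<le> d"
  proof (rule real_small_le)
    fix e :: real assume e: "e > 0"
    obtain N1 where N1: "\<forall>n\<ge>N1. nr (T (xs n) - g) < e/2" using g e unfolding conv_def
      by (meson half_gt_zero)
    obtain N2 :: nat where N2: "2 / e < real N2" using reals_Archimedean2 by blast
    define k where "k = max N1 N2"
    have "1/(real k + 1) < e/2"
    proof -
      have "2/e < real k + 1" using N2 unfolding k_def by (smt (verit) le_max_iff_disj of_nat_le_iff)
      thus ?thesis using e by (simp add: field_simps)
    qed
    moreover have "nr (T (xs k) - g) < e/2" using N1 unfolding k_def by auto
    moreover have "nr (f - g) \<le> nr (f - T (xs k)) + nr (T (xs k) - g)" by (rule nr_diff_triangle)
    ultimately show "nr (f - T x0) < d + e" using xsb[of k] unfolding Tx0 by linarith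
  qed
  define r where "r = f - T x0"
  have orth: "ip (T w) r = 0" if w: "w \<in> D" for w
  proof (rule ccontr)
    assume ne: "ip (T w) r \<noteq> 0"
    define \<beta> where "\<beta> = ip r (T w)"
    have b0: "\<beta> \<noteq> 0" using ne ip_conj[of r "T w"] unfolding \<beta>_def by (metis complex_cnj_zero_iff ip_conj)
    define t where "t = (nr (T w))^2"
    define s where "s = 1 / (t + 1)"
    have t0: "t \<ge> 0" unfolding t_def by simp
    have s0: "s > 0" unfolding s_def using t0 by simp
    define b where "b = of_real s * \<beta>"
    define y where "y = x0 + scl b w"
    have yD: "y \<in> D" unfolding y_def using x0D w by (intro Dadd Dscl)
    have fy: "f - T y = r + - scl b (T w)"
      unfolding y_def r_def using Tadd'[OF x0D Dscl[OF w]] Tscl'[OF w] by simp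
    have "(nr (f - T y))^2 = (nr r)^2 + (nr (scl b (T w)))^2 + 2 * Re (ip r (- scl b (T w)))"
      unfolding fy by (simp only: nr_add_sq nr_minus)
    also have "... = (nr r)^2 + s^2 * (cmod \<beta>)^2 * t - 2 * s * (cmod \<beta>)^2"
    proof -
      have "ip r (- scl b (T w)) = - (of_real s * (cnj \<beta> * \<beta>))"
        unfolding b_def \<beta>_def by (simp add: ip_minus2 ip_scl2)
      also have "... = - of_real (s * (cmod \<beta>)^2)"
        using complex_norm_square[of \<beta>] by (simp add: mult.commute)
      finally have "Re (ip r (- scl b (T w))) = - s * (cmod \<beta>)^2" by simp
      moreover have "(nr (scl b (T w)))^2 = s^2 * (cmod \<beta>)^2 * t"
        unfolding nr_scl b_def t_def using s0 by (simp add: norm_mult power_mult_distrib)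
      ultimately show ?thesis by simp
    qed
    finally have eq: "(nr (f - T y))^2 = (nr r)^2 + s^2 * (cmod \<beta>)^2 * t - 2 * s * (cmod \<beta>)^2" .
    have "nr r \<le> nr (f - T y)" using rd dle[OF yD] unfolding r_def by linarith
    hence "(nr r)^2 \<le> (nr (f - T y))^2" by (intro power_mono) auto
    hence "2 * s * (cmod \<beta>)^2 \<le> s^2 * (cmod \<beta>)^2 * t" using eq by linarith
    hence "2 * (s * (cmod \<beta>)^2) \<le> (s * t) * (s * (cmod \<beta>)^2)" by (simp add: power2_eq_square algebra_simps)
    moreover have "s * (cmod \<beta>)^2 > 0" using s0 b0 by simp
    ultimately have "2 \<le> s * t" using mult_le_cancel_right_pos by blast
    moreover have "s * t < 1" unfolding s_def using t0 by (simp add: field_simps)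
    ultimately show False by simp
  qed
  have "r \<in> D \<and> A r = scl (cnj z) r"
  proof (rule Aadj)
    fix w assume w: "w \<in> D"
    have "A w = T w + scl z w" unfolding T_def by simp
    hence "ip (A w) r = ip (T w) r + z * ip w r" by (simp add: ip_add1 ip_scl1)
    thus "ip (A w) r = ip w (scl (cnj z) r)" using orth[OF w] by (simp add: ip_scl2)
  qed
  hence "r = 0" using ker by blast
  thus ?thesis unfolding r_def T_def using x0D by (metis eq_iff_diff_eq_0)
qed

end


context saop begin

lemma not_spec:
  assumes c: "c > 0" and lb: "\<And>x. x \<in> D \<Longrightarrow> c * nr x \<le> nr (A x - scl z x)"
  and ker: "\<And>y. y \<in> D \<Longrightarrow> A y = scl (cnj z) y \<Longrightarrow> y = 0"
  shows "z \<notin> op_spectrum scl ip D A"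
proof -
  define S where "S = (\<lambda>x. scl z x - A x)"
  have nS: "nr (S x) = nr (A x - scl z x)" for x unfolding S_def by (rule nr_commute)
  have inj: "inj_on S D"
  proof (rule inj_onI)
    fix x y assume x: "x \<in> D" and y: "y \<in> D" and e: "S x = S y"
    have "A (x - y) - scl z (x - y) = (A x - scl z x) - (A y - scl z y)" by (rule Tdiff[OF x y])
    also have "... = 0" using e unfolding S_def by (simp add: algebra_simps)
    finally have "c * nr (x - y) \<le> 0" using lb[OF Ddiff[OF x y]] by simp
    hence "nr (x - y) = 0" using c nr_ge0[of "x - y"] by (simp add: mult_le_0_iff)
    thus "x = y" by simp
  qed
  have surj: "S ` D = UNIV"
  proof -
    have "f \<in> S ` D" for f
    proof -
      obtain x where "x \<in> D" "A x - scl z x = - f" using surj_T[OF c lb ker] by blast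
      hence "S x = f" unfolding S_def by (simp add: algebra_simps)
      thus ?thesis using \<open>x \<in> D\<close> by blast
    qed
    thus ?thesis by blast
  qed
  have bij: "bij_betw S D UNIV" using inj surj unfolding bij_betw_def by blast
  have bd: "nr (the_inv_into D S y) \<le> (1/c) * nr y" for y
  proof -
    have xD: "the_inv_into D S y \<in> D" using the_inv_into_into[OF inj] surj by blast
    have "S (the_inv_into D S y) = y" using f_the_inv_into_f[OF inj] surj by blast
    hence "c * nr (the_inv_into D S y) \<le> nr y" using lb[OF xD] nS by metis
    thus ?thesis using c by (simp add: field_simps)
  qed
  show ?thesis unfolding op_spectrum_def using bij bd S_def by blast
qed

lemma resolvent_props:
  assumes "z \<notin> op_spectrum scl ip D A"
  defines "R \<equiv> the_inv_into D (\<lambda>x. scl z x - A x)"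
  shows "\<And>y. R y \<in> D" and "\<And>y. scl z (R y) - A (R y) = y"
    and "\<And>x. x \<in> D \<Longrightarrow> R (scl z x - A x) = x"
    and "\<exists>C. \<forall>y. nr (R y) \<le> C * nr y"
proof -
  have bij: "bij_betw (\<lambda>x. scl z x - A x) D UNIV"
    and C: "\<exists>C. \<forall>y. nr (R y) \<le> C * nr y"
    using assms unfolding op_spectrum_def by blast+
  have inj: "inj_on (\<lambda>x. scl z x - A x) D" and im: "(\<lambda>x. scl z x - A x) ` D = UNIV"
    using bij unfolding bij_betw_def by auto
  show "\<And>y. R y \<in> D" unfolding R_def using the_inv_into_into[OF inj] im by blast
  show "\<And>y. scl z (R y) - A (R y) = y" unfolding R_def using f_the_inv_into_f[OF inj] im by blast
  show "\<And>x. x \<in> D \<Longrightarrow> R (scl z x - A x) = x" unfolding R_def using the_inv_into_f_f[OF inj] by blast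
  show "\<exists>C. \<forall>y. nr (R y) \<le> C * nr y" by (rule C)
qed

end


context chs begin

lemma core:
  fixes B Q :: "'a \<Rightarrow> 'a"
  assumes Badd: "\<And>x y. B (x + y) = B x + B y" and Bscl: "\<And>a x. B (scl a x) = scl a (B x)"
    and Bsym: "\<And>x y. ip (B x) y = ip x (B y)"
    and Bpos: "\<And>x. 0 \<le> Re (ip (B x) x)"
    and Kb: "Kb \<ge> 0" and Bbd: "\<And>x. nr (B x) \<le> Kb * nr x"
    and Qadd: "\<And>x y. Q (x + y) = Q x + Q y" and Qscl: "\<And>a x. Q (scl a x) = scl a (Q x)"
    and Qsym: "\<And>x y. ip (Q x) y = ip x (Q y)"
    and Kq: "Kq \<ge> 0" and Qbd: "\<And>x. nr (Q x) \<le> Kq * nr x"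
    and ex: "Re (ip (Q (B x0)) (B x0)) > 0"
  shows "\<exists>M>0. \<forall>e>0. \<exists>x. (nr (B x))^2 \<le> Kb \<and> M - e \<le> Re (ip (Q (B x)) (B x))
            \<and> nr (scl (of_real M) (B x) - B (Q (B x))) \<le> e"
proof -
  define q where "q x = Re (ip (B x) x)" for x
  define h where "h x = Re (ip (Q (B x)) (B x))" for x
  have q0: "0 \<le> q x" for x unfolding q_def by (rule Bpos)
  have ipQ: "cmod (ip (Q y) y) \<le> Kq * (nr y)^2" for y
  proof -
    have "cmod (ip (Q y) y) \<le> nr (Q y) * nr y" by (rule cs)
    also have "... \<le> Kq * nr y * nr y" using Qbd[of y] by (intro mult_right_mono) auto
    finally show ?thesis by (simp add: power2_eq_square mult.assoc)
  qed
  have ipB: "cmod (ip (B y) y) \<le> Kb * (nr y)^2" for y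
  proof -
    have "cmod (ip (B y) y) \<le> nr (B y) * nr y" by (rule cs)
    also have "... \<le> Kb * nr y * nr y" using Bbd[of y] by (intro mult_right_mono) auto
    finally show ?thesis by (simp add: power2_eq_square mult.assoc)
  qed
  have Bherm: "ip (B x) y = cnj (ip (B y) x)" for x y using Bsym ip_conj by metis
  have Bcs: "(cmod (ip (B x) y))^2 \<le> q x * q y" for x y
    unfolding q_def
    by (rule form_cs[of "\<lambda>u v. ip (B u) v"]) (auto simp: Badd Bscl ip_add1 ip_scl1 intro: Bherm Bpos)
  have F1: "(nr (B x))^2 \<le> Kb * q x" for x
  proof (cases "nr (B x) = 0")
    case True thus ?thesis using Kb q0[of x] by simp
  next
    case False
    have "(cmod (ip (B x) (B x)))^2 \<le> q x * q (B x)" by (rule Bcs)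
    moreover have "cmod (ip (B x) (B x)) = (nr (B x))^2" by (simp add: ip_self_nr norm_power)
    moreover have "q (B x) \<le> Kb * (nr (B x))^2" unfolding q_def
      using ipB[of "B x"] complex_Re_le_cmod order_trans by blast
    ultimately have "((nr (B x))^2)^2 \<le> q x * (Kb * (nr (B x))^2)"
      by (metis mult_left_mono q0 order_trans)
    hence "(nr (B x))^2 * (nr (B x))^2 \<le> (Kb * q x) * (nr (B x))^2"
      by (simp add: power2_eq_square algebra_simps)
    moreover have "(nr (B x))^2 > 0" using False by simp
    ultimately show ?thesis using mult_le_cancel_right_pos by blast
  qed
  have F2: "\<bar>h x\<bar> \<le> Kq * Kb * q x" for x
  proof -
    have "\<bar>h x\<bar> \<le> cmod (ip (Q (B x)) (B x))" unfolding h_def by (rule abs_Re_le_cmod)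
    also have "... \<le> Kq * (nr (B x))^2" by (rule ipQ)
    also have "... \<le> Kq * (Kb * q x)" using F1 Kq by (intro mult_left_mono) auto
    finally show ?thesis by (simp add: mult.assoc)
  qed
  have F4: "q x = 0 \<Longrightarrow> h x = 0" for x using F1[of x] Kb unfolding h_def by simp
  have F3q: "q (scl a x) = (cmod a)^2 * q x" for a x
  proof -
    have "ip (B (scl a x)) (scl a x) = (a * cnj a) * ip (B x) x" by (simp add: Bscl ip_scl1 ip_scl2)
    also have "... = of_real ((cmod a)^2) * ip (B x) x" using complex_norm_square[of a] by simp
    finally show ?thesis unfolding q_def by simp
  qed
  have F3h: "h (scl a x) = (cmod a)^2 * h x" for a x
  proof -
    have "ip (Q (B (scl a x))) (B (scl a x)) = (a * cnj a) * ip (Q (B x)) (B x)" by (simp add: Bscl Qscl ip_scl1 ip_scl2)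
    also have "... = of_real ((cmod a)^2) * ip (Q (B x)) (B x)" using complex_norm_square[of a] by simp
    finally show ?thesis unfolding h_def by simp
  qed
  have normalize: "q (scl (of_real (1 / sqrt (q x))) x) = 1 \<and> h (scl (of_real (1 / sqrt (q x))) x) = h x / q x"
    if "q x > 0" for x
  proof -
    have "(cmod (of_real (1 / sqrt (q x)) :: complex))^2 = 1 / q x"
      using that by (simp only: norm_of_real) (simp add: power_divide)
    thus ?thesis unfolding F3q F3h using that by simp
  qed
  define H where "H = {h x | x. q x \<le> 1}"
  define M where "M = Sup H"
  have Hne: "H \<noteq> {}" unfolding H_def using q0 F4 by (metis (mono_tags, lifting) empty_iff mem_Collect_eq zero_le_one F3q norm_zero power_zero_numeral mult_zero_left)
  have Hbdd: "bdd_above H" unfolding H_def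
  proof (rule bdd_aboveI[of _ "Kq * Kb"])
    fix s assume "s \<in> {h x | x. q x \<le> 1}"
    then obtain x where "s = h x" "q x \<le> 1" by blast
    moreover have "Kq * Kb * q x \<le> Kq * Kb" using \<open>q x \<le> 1\<close> Kq Kb by (simp add: mult_left_le)
    ultimately show "s \<le> Kq * Kb" using F2[of x] by linarith
  qed
  have Hle: "\<And>x. q x \<le> 1 \<Longrightarrow> h x \<le> M" unfolding M_def H_def
    using Hbdd H_def by (auto intro!: cSup_upper)
  have qx0: "q x0 > 0" using ex F4[of x0] q0[of x0] unfolding h_def by fastforce
  have Mpos: "M > 0"
  proof -
    have "h x0 / q x0 \<le> M" using normalize[OF qx0] Hle[of "scl (of_real (1 / sqrt (q x0))) x0"] by simp
    moreover have "h x0 / q x0 > 0" using ex qx0 unfolding h_def by simp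
    ultimately show ?thesis by simp
  qed
  have F5: "h x \<le> M * q x" for x
  proof (cases "q x = 0")
    case True thus ?thesis using F4 by simp
  next
    case False
    hence qp: "q x > 0" using q0[of x] by simp
    have "h x / q x \<le> M" using normalize[OF qp] Hle[of "scl (of_real (1 / sqrt (q x))) x"] by simp
    thus ?thesis using qp by (simp add: divide_le_eq)
  qed
  define p where "p u v = of_real M * ip (B u) v - ip (Q (B u)) (B v)" for u v
  have padd: "p (x + y) z = p x z + p y z" for x y z
    unfolding p_def by (simp add: Badd Qadd ip_add1 algebra_simps)
  have pscl: "p (scl a x) z = a * p x z" for a x z
    unfolding p_def by (simp add: Bscl Qscl ip_scl1 algebra_simps)
  have pherm: "p x y = cnj (p y x)" for x y
  proof -
    have "cnj (ip (Q (B y)) (B x)) = ip (Q (B x)) (B y)" using Qsym ip_conj by metis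
    moreover have "cnj (ip (B y) x) = ip (B x) y" using Bherm[of x y] by simp
    ultimately show ?thesis unfolding p_def by simp
  qed
  have pRe: "Re (p x x) = M * q x - h x" for x unfolding p_def q_def h_def by simp
  have ppos: "0 \<le> Re (p x x)" for x unfolding pRe using F5[of x] by simp
  define K where "K = M * Kb + Kq * Kb^2"
  have K0: "K \<ge> 0" unfolding K_def using Mpos Kb Kq by simp
  have pbd: "Re (p y y) \<le> K * (nr y)^2" for y
  proof -
    have "M * q y \<le> M * (Kb * (nr y)^2)" using Mpos ipB[of y] complex_Re_le_cmod[of "ip (B y) y"]
      unfolding q_def by (intro mult_left_mono) auto
    moreover have "- h y \<le> Kq * (nr (B y))^2" using ipQ[of "B y"] abs_Re_le_cmod[of "ip (Q (B y)) (B y)"]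
      unfolding h_def by linarith
    moreover have "Kq * (nr (B y))^2 \<le> Kq * (Kb * nr y)^2" using Bbd[of y] Kq
      by (intro mult_left_mono power_mono) auto
    ultimately show ?thesis unfolding pRe K_def by (simp add: power_mult_distrib algebra_simps)
  qed
  have pcs: "(cmod (p x y))^2 \<le> Re (p x x) * Re (p y y)" for x y
    by (rule form_cs[of p, OF padd pscl pherm ppos])
  show ?thesis
  proof (intro exI[of _ M] conjI allI impI Mpos)
    fix e :: real assume e: "e > 0"
    define \<delta> where "\<delta> = min e (e^2 / (K + 1))"
    have d0: "\<delta> > 0" unfolding \<delta>_def using e K0 by simp
    have "M - \<delta> < Sup H" unfolding M_def using d0 by simp
    then obtain s where "s \<in> H" "M - \<delta> < s" using less_cSupD[OF Hne] by blast
    then obtain x where qx: "q x \<le> 1" and hx: "M - \<delta> < h x" unfolding H_def by blast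
    define y where "y = scl (of_real M) (B x) - B (Q (B x))"
    have pxy: "p x y = ip y y"
      unfolding p_def y_def by (simp add: Bsym[symmetric] ip_diff1 ip_scl1)
    have pxx: "Re (p x x) \<le> \<delta>"
    proof -
      have "M * q x \<le> M" using qx Mpos by (simp add: mult_left_le)
      thus ?thesis unfolding pRe using hx by linarith
    qed
    have "nr y \<le> e"
    proof (cases "nr y = 0")
      case True thus ?thesis using e by simp
    next
      case False
      have "((nr y)^2)^2 \<le> Re (p x x) * Re (p y y)" using pcs[of x y] unfolding pxy by (simp add: ip_self_nr norm_power)
      also have "... \<le> \<delta> * (K * (nr y)^2)"
        using pxx pbd[of y] ppos[of x] ppos[of y] by (intro mult_mono) auto
      finally have "(nr y)^2 * (nr y)^2 \<le> (\<delta> * K) * (nr y)^2" by (simp add: power2_eq_square algebra_simps)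
      moreover have "(nr y)^2 > 0" using False by simp
      ultimately have "(nr y)^2 \<le> \<delta> * K" using mult_le_cancel_right_pos by blast
      also have "... \<le> (e^2 / (K + 1)) * K" unfolding \<delta>_def using K0 by (intro mult_right_mono) auto
      also have "... \<le> e^2" using K0 by (simp add: field_simps)
      finally have "(nr y)^2 \<le> e^2" .
      thus ?thesis using e power2_le_imp_le[of "nr y" e] by simp
    qed
    moreover have "M - e \<le> h x" using hx unfolding \<delta>_def by linarith
    moreover have "(nr (B x))^2 \<le> Kb" using F1[of x] qx Kb by (smt (verit) mult_left_le)
    ultimately show "\<exists>x. (nr (B x))^2 \<le> Kb \<and> M - e \<le> Re (ip (Q (B x)) (B x))
            \<and> nr (scl (of_real M) (B x) - B (Q (B x))) \<le> e"
      unfolding h_def y_def by blast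
  qed
qed

end


context saop begin

lemma Ssym: "cnj v = v \<Longrightarrow> a \<in> D \<Longrightarrow> b \<in> D \<Longrightarrow> ip (scl v a - A a) b = ip a (scl v b - A b)"
  by (simp add: ip_diff1 ip_diff2 ip_scl1 ip_scl2 Asym)
lemma Sadd: "a \<in> D \<Longrightarrow> b \<in> D \<Longrightarrow> scl v (a + b) - A (a + b) = (scl v a - A a) + (scl v b - A b)"
  by (simp add: Aadd vs.scale_right_distrib algebra_simps)
lemma Sscl: "a \<in> D \<Longrightarrow> scl v (scl c a) - A (scl c a) = scl c (scl v a - A a)"
  by (simp add: Ascl vs.scale_right_diff_distrib mult.commute)

lemma A_real: "x \<in> D \<Longrightarrow> Im (ip (A x) x) = 0"
proof -
  assume x: "x \<in> D"
  have "ip (A x) x = cnj (ip (A x) x)" using Asym[OF x x] ip_conj[of x "A x"] by simp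
  hence "Im (ip (A x) x) = Im (cnj (ip (A x) x))" by metis
  thus ?thesis by simp
qed

lemma lb_nonreal: "x \<in> D \<Longrightarrow> \<bar>Im w\<bar> * nr x \<le> nr (A x - scl w x)"
proof -
  assume x: "x \<in> D"
  have "Im (ip (A x - scl w x) x) = - Im w * (nr x)^2"
    using A_real[OF x] by (simp add: ip_diff1 ip_scl1 ip_self_nr)
  hence "\<bar>Im w\<bar> * (nr x)^2 \<le> cmod (ip (A x - scl w x) x)"
    by (metis abs_Im_le_cmod abs_minus_cancel abs_mult abs_of_nonneg mult_minus_left zero_le_power2)
  also have "... \<le> nr (A x - scl w x) * nr x" by (rule cs)
  finally have h: "(\<bar>Im w\<bar> * nr x) * nr x \<le> nr (A x - scl w x) * nr x" by (simp add: power2_eq_square mult.assoc)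
  show ?thesis
  proof (cases "nr x = 0")
    case True thus ?thesis by simp
  next
    case False thus ?thesis using h nr_ge0[of x] mult_le_cancel_right_pos by (metis less_eq_real_def)
  qed
qed

lemma R_facts:
  assumes ns: "v \<notin> op_spectrum scl ip D A"
  defines "R \<equiv> the_inv_into D (\<lambda>x. scl v x - A x)"
  shows "\<And>y. R y \<in> D" and "\<And>y. scl v (R y) - A (R y) = y"
    and "\<And>x y. R (x + y) = R x + R y" and "\<And>a x. R (scl a x) = scl a (R x)"
    and "cnj v = v \<Longrightarrow> ip (R x) y = ip x (R y)"
    and "\<exists>C\<ge>0. \<forall>y. nr (R y) \<le> C * nr y"
proof -
  note P = resolvent_props[OF ns, folded R_def]
  show RD: "\<And>y. R y \<in> D" and RS: "\<And>y. scl v (R y) - A (R y) = y" by (rule P(1), rule P(2))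
  show "\<And>x y. R (x + y) = R x + R y"
  proof -
    fix x y
    have "R x + R y = R (scl v (R x + R y) - A (R x + R y))" using P(3) RD Dadd by metis
    also have "... = R (x + y)" using Sadd[OF RD RD, of v] RS by simp
    finally show "R (x + y) = R x + R y" by simp
  qed
  show "\<And>a x. R (scl a x) = scl a (R x)"
  proof -
    fix a x
    have "scl a (R x) = R (scl v (scl a (R x)) - A (scl a (R x)))" using P(3) RD Dscl by metis
    also have "... = R (scl a x)" using Sscl[OF RD, of v a] RS by simp
    finally show "R (scl a x) = scl a (R x)" by simp
  qed
  show "cnj v = v \<Longrightarrow> ip (R x) y = ip x (R y)"
  proof -
    assume r: "cnj v = v"
    have "ip (R x) y = ip (R x) (scl v (R y) - A (R y))" using RS by simp
    also have "... = ip (scl v (R x) - A (R x)) (R y)" using Ssym[OF r RD RD] by simp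
    also have "... = ip x (R y)" using RS by simp
    finally show ?thesis .
  qed
  obtain C where C: "\<forall>y. nr (R y) \<le> C * nr y" using P(4) by blast
  show "\<exists>C\<ge>0. \<forall>y. nr (R y) \<le> C * nr y"
  proof (intro exI conjI allI)
    fix y show "nr (R y) \<le> max C 0 * nr y" using C[rule_format, of y] nr_ge0[of y]
      by (smt (verit) mult_right_mono)
  qed simp
qed

end


context saop begin

lemma zero_form:
  fixes B :: "'a \<Rightarrow> 'a" and \<nu> :: real
  assumes Badd: "\<And>x y. B (x + y) = B x + B y" and Bscl: "\<And>a x. B (scl a x) = scl a (B x)"
    and Bsym: "\<And>x y. ip (B x) y = ip x (B y)"
    and Bpos: "\<And>x. 0 \<le> Re (ip (B x) x)"
    and Kb: "Kb \<ge> 0" and Bbd: "\<And>x. nr (B x) \<le> Kb * nr x"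
    and inv: "\<forall>t::real. op_spectrum scl ip D (\<lambda>x. A x + scl (complex_of_real t) (B x))
                   = op_spectrum scl ip D A"
    and ns: "complex_of_real \<nu> \<notin> op_spectrum scl ip D A"
  shows "ip (the_inv_into D (\<lambda>x. scl (complex_of_real \<nu>) x - A x) (B x0)) (B x0) = 0"
proof (rule ccontr)
  define v where "v = complex_of_real \<nu>"
  have cv: "cnj v = v" unfolding v_def by simp
  define R where "R = the_inv_into D (\<lambda>x. scl v x - A x)"
  note RF = R_facts[OF ns[folded v_def], folded R_def]
  have RD: "\<And>y. R y \<in> D" and RS: "\<And>y. scl v (R y) - A (R y) = y"
    and Radd: "\<And>x y. R (x + y) = R x + R y" and Rscl: "\<And>a x. R (scl a x) = scl a (R x)"
    and Rsym: "\<And>x y. ip (R x) y = ip x (R y)"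
    using RF(1-4) RF(5)[OF cv] by auto
  obtain C where C0: "C \<ge> 0" and Cb: "\<And>y. nr (R y) \<le> C * nr y" using RF(6) by blast
  assume ne: "ip (the_inv_into D (\<lambda>x. scl (complex_of_real \<nu>) x - A x) (B x0)) (B x0) \<noteq> 0"
  hence ne': "ip (R (B x0)) (B x0) \<noteq> 0" unfolding R_def v_def .
  have "Im (ip (R (B x0)) (B x0)) = 0"
  proof -
    have "ip (R (B x0)) (B x0) = cnj (ip (R (B x0)) (B x0))" using Rsym ip_conj by metis
    hence "Im (ip (R (B x0)) (B x0)) = Im (cnj (ip (R (B x0)) (B x0)))" by metis
    thus ?thesis by simp
  qed
  hence Re0: "Re (ip (R (B x0)) (B x0)) \<noteq> 0" using ne' complex_eq_iff by force
  define \<sigma> :: real where "\<sigma> = sgn (Re (ip (R (B x0)) (B x0)))"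
  have s2: "\<sigma> * \<sigma> = 1" unfolding \<sigma>_def using Re0 by (simp add: sgn_mult_self_eq)
  have sabs: "\<bar>\<sigma>\<bar> = 1" unfolding \<sigma>_def using Re0 by (simp add: abs_sgn_eq)
  define Q where "Q y = scl (of_real \<sigma>) (R y)" for y
  have Qadd: "\<And>x y. Q (x + y) = Q x + Q y" unfolding Q_def by (simp add: Radd vs.scale_right_distrib)
  have Qscl: "\<And>a x. Q (scl a x) = scl a (Q x)" unfolding Q_def by (simp add: Rscl mult.commute)
  have Qsym: "\<And>x y. ip (Q x) y = ip x (Q y)" unfolding Q_def by (simp add: ip_scl1 ip_scl2 Rsym)
  have Qbd: "\<And>x. nr (Q x) \<le> C * nr x" unfolding Q_def using Cb sabs by (simp add: nr_scl)
  have Qpos: "Re (ip (Q (B x0)) (B x0)) > 0" unfolding Q_def \<sigma>_def using Re0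
    by (simp add: ip_scl1 sgn_real_def)
  obtain M where Mpos: "M > 0" and MC: "\<And>e. e > 0 \<Longrightarrow> \<exists>x. (nr (B x))^2 \<le> Kb \<and> M - e \<le> Re (ip (Q (B x)) (B x))
            \<and> nr (scl (of_real M) (B x) - B (Q (B x))) \<le> e"
    using core[OF Badd Bscl Bsym Bpos Kb Bbd Qadd Qscl Qsym C0 Qbd Qpos] by blast
  define t where "t = \<sigma> / M"
  have "v \<in> op_spectrum scl ip D (\<lambda>x. A x + scl (complex_of_real t) (B x))"
  proof (rule ccontr)
    define S' where "S' x = scl v x - (A x + scl (complex_of_real t) (B x))" for x
    assume "v \<notin> op_spectrum scl ip D (\<lambda>x. A x + scl (complex_of_real t) (B x))"
    hence bij: "bij_betw S' D UNIV" and "\<exists>C'. \<forall>y. nr (the_inv_into D S' y) \<le> C' * nr y"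
      unfolding op_spectrum_def S'_def by blast+
    then obtain C' where C': "\<And>y. nr (the_inv_into D S' y) \<le> C' * nr y" by blast
    have inj: "inj_on S' D" using bij bij_betw_def by blast
    define C'' where "C'' = max C' 0"
    have C''0: "C'' \<ge> 0" unfolding C''_def by simp
    have zb: "nr z \<le> C'' * nr (S' z)" if "z \<in> D" for z
    proof -
      have "nr z \<le> C' * nr (S' z)" using C'[of "S' z"] the_inv_into_f_f[OF inj that] by simp
      also have "... \<le> C'' * nr (S' z)" unfolding C''_def by (intro mult_right_mono) auto
      finally show ?thesis .
    qed
    define L where "L = C'' * sqrt Kb / M"
    have L0: "L \<ge> 0" unfolding L_def using C''0 Kb Mpos by simp
    define \<epsilon> where "\<epsilon> = min (M/2) (M / (4*(L+1)))"
    have e0: "\<epsilon> > 0" unfolding \<epsilon>_def using Mpos L0 by simp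
    obtain x where xB: "(nr (B x))^2 \<le> Kb" and xh: "M - \<epsilon> \<le> Re (ip (Q (B x)) (B x))"
      and xe: "nr (scl (of_real M) (B x) - B (Q (B x))) \<le> \<epsilon>" using MC[OF e0] by blast
    define z where "z = R (B x)"
    have zD: "z \<in> D" unfolding z_def by (rule RD)
    have "S' z = B x - scl (complex_of_real t) (B z)"
      unfolding S'_def using RS[of "B x"] unfolding z_def by (simp add: algebra_simps)
    also have "... = scl (of_real (1/M)) (scl (of_real M) (B x) - B (Q (B x)))"
      unfolding Q_def t_def z_def using Mpos
      by (simp add: Bscl vs.scale_right_diff_distrib)
    finally have Sz: "S' z = scl (of_real (1/M)) (scl (of_real M) (B x) - B (Q (B x)))" .
    have cm: "cmod (complex_of_real (1/M)) = 1/M" using Mpos by (simp only: norm_of_real) simp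
    have "nr (S' z) = (1/M) * nr (scl (of_real M) (B x) - B (Q (B x)))" unfolding Sz nr_scl cm ..
    also have "... \<le> (1/M) * \<epsilon>" using xe Mpos by (intro mult_left_mono) auto
    finally have "nr (S' z) \<le> \<epsilon> / M" by simp
    hence nz: "nr z \<le> C'' * (\<epsilon> / M)" using zb[OF zD] C''0 by (smt (verit) mult_left_mono)
    have nB: "nr (B x) \<le> sqrt Kb" using xB by (simp add: real_le_rsqrt)
    have "Re (ip (Q (B x)) (B x)) = \<sigma> * Re (ip z (B x))" unfolding Q_def z_def by (simp add: ip_scl1)
    also have "... \<le> \<bar>\<sigma> * Re (ip z (B x))\<bar>" by (rule abs_ge_self)
    also have "... = \<bar>Re (ip z (B x))\<bar>" using sabs by (simp add: abs_mult)
    also have "... \<le> cmod (ip z (B x))" by (rule abs_Re_le_cmod)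
    also have "... \<le> nr z * nr (B x)" by (rule cs)
    also have "... \<le> (C'' * (\<epsilon> / M)) * sqrt Kb" using nz nB C''0 e0 Mpos by (intro mult_mono) auto
    also have "... = \<epsilon> * L" unfolding L_def by simp
    also have "... \<le> (M / (4*(L+1))) * L" unfolding \<epsilon>_def using L0 by (intro mult_right_mono) auto
    also have "... < M / 4"
    proof -
      have "(M / (4*(L+1))) * L = (M/4) * (L/(L+1))" by (simp add: field_simps)
      also have "... < (M/4) * 1" using Mpos L0 by (intro mult_strict_left_mono) auto
      finally show ?thesis by simp
    qed
    finally have "M - \<epsilon> < M / 4" using xh by linarith
    moreover have "\<epsilon> \<le> M/2" unfolding \<epsilon>_def by (rule min.cobounded1)
    ultimately show False using Mpos by linarith
  qed
  thus False using inv ns unfolding v_def by blast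
qed

end


theorem corollary1p2:
  fixes scl :: "complex \<Rightarrow> 'a::ab_group_add \<Rightarrow> 'a"
    and ip :: "'a \<Rightarrow> 'a \<Rightarrow> complex"
    and D :: "'a set" and A B :: "'a \<Rightarrow> 'a"
  assumes "complex_hilbert_space scl ip"
    and "self_adjoint_op scl ip D A"
    and "self_adjoint_op scl ip UNIV B"
    and "bounded_op ip B"
    and "nonneg_op ip B"
    and "\<forall>t::real. op_spectrum scl ip D (\<lambda>x. A x + scl (complex_of_real t) (B x))
                   = op_spectrum scl ip D A"
  shows "(\<forall>x. B x = 0) \<or> op_spectrum scl ip D A = \<real>"
proof -
  interpret saop scl ip D A using assms(1,2) by (simp add: saop_def chs_def saop_axioms_def)
  have Badd: "\<And>x y. B (x + y) = B x + B y" and Bscl: "\<And>a x. B (scl a x) = scl a (B x)"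
    and Bsym: "\<And>x y. ip (B x) y = ip x (B y)"
  proof -
    have h: "linear_op_on scl UNIV B \<and> (\<forall>x\<in>UNIV. \<forall>y\<in>UNIV. ip (B x) y = ip x (B y))"
      using assms(3) unfolding self_adjoint_op_def by blast
    show "\<And>x y. B (x + y) = B x + B y" "\<And>a x. B (scl a x) = scl a (B x)"
      "\<And>x y. ip (B x) y = ip x (B y)" using h unfolding linear_op_on_def by blast+
  qed
  have Bpos: "\<And>x. 0 \<le> Re (ip (B x) x)" using assms(5) unfolding nonneg_op_def by auto
  obtain K0 where K0: "\<And>x. nr (B x) \<le> K0 * nr x" using assms(4) unfolding bounded_op_def by blast
  define Kb where "Kb = max K0 0"
  have Kb: "Kb \<ge> 0" unfolding Kb_def by simp
  have Bbd: "\<And>x. nr (B x) \<le> Kb * nr x"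
  proof -
    fix x have "K0 * nr x \<le> Kb * nr x" unfolding Kb_def by (intro mult_right_mono) auto
    thus "nr (B x) \<le> Kb * nr x" using K0[of x] by linarith
  qed
  note ZF = zero_form[OF Badd Bscl Bsym Bpos Kb Bbd assms(6)]
  have A0: "A 0 = 0" using Ascl[OF D0, of 0] by simp
  show ?thesis
  proof (cases "\<forall>x. B x = 0")
    case True thus ?thesis by simp
  next
    case False
    then obtain xb where xb: "B xb \<noteq> 0" by blast
    have sub1: "op_spectrum scl ip D A \<subseteq> \<real>"
    proof
      fix z assume zs: "z \<in> op_spectrum scl ip D A"
      show "z \<in> \<real>"
      proof (rule ccontr)
        assume "z \<notin> \<real>"
        hence imz: "Im z \<noteq> 0" using complex_is_Real_iff by auto
        have "z \<notin> op_spectrum scl ip D A"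
        proof (rule not_spec[of "\<bar>Im z\<bar>"])
          show "\<bar>Im z\<bar> > 0" using imz by simp
          show "\<And>x. x \<in> D \<Longrightarrow> \<bar>Im z\<bar> * nr x \<le> nr (A x - scl z x)" by (rule lb_nonreal)
          show "y = 0" if "y \<in> D" "A y = scl (cnj z) y" for y
          proof -
            have "\<bar>Im (cnj z)\<bar> * nr y \<le> nr (A y - scl (cnj z) y)" by (rule lb_nonreal[OF that(1)])
            hence "\<bar>Im z\<bar> * nr y \<le> 0" using that(2) by simp
            hence "nr y = 0" using imz nr_ge0[of y] by (simp add: mult_le_0_iff)
            thus ?thesis by simp
          qed
        qed
        thus False using zs by blast
      qed
    qed
    have sub2: "\<real> \<subseteq> op_spectrum scl ip D A"
    proof
      fix z :: complex assume "z \<in> \<real>"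
      then obtain l where z: "z = complex_of_real l" using Reals_cases by blast
      show "z \<in> op_spectrum scl ip D A"
      proof (rule ccontr)
        assume "z \<notin> op_spectrum scl ip D A"
        hence nsl: "complex_of_real l \<notin> op_spectrum scl ip D A" unfolding z .
        define lc where "lc = complex_of_real l"
        define Rl where "Rl = the_inv_into D (\<lambda>x. scl lc x - A x)"
        note RLF = R_facts[OF nsl[folded lc_def], folded Rl_def]
        have RlD: "\<And>y. Rl y \<in> D" and RlS: "\<And>y. scl lc (Rl y) - A (Rl y) = y" using RLF(1,2) by auto
        obtain C0 where C0: "C0 \<ge> 0" and C0b: "\<And>y. nr (Rl y) \<le> C0 * nr y" using RLF(6) by blast
        have RlSx: "\<And>x. x \<in> D \<Longrightarrow> Rl (scl lc x - A x) = x"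
          using resolvent_props(3)[OF nsl[folded lc_def]] unfolding Rl_def by blast
        define c where "c = 1 / (C0 + 1)"
        have c0: "c > 0" unfolding c_def using C0 by simp
        have lbl: "c * nr x \<le> nr (A x - scl lc x)" if x: "x \<in> D" for x
        proof -
          have "nr x \<le> C0 * nr (scl lc x - A x)" using C0b[of "scl lc x - A x"] RlSx[OF x] by simp
          also have "... \<le> (C0 + 1) * nr (A x - scl lc x)" using nr_commute[of "scl lc x" "A x"]
            by (simp add: distrib_right)
          finally show ?thesis unfolding c_def using C0 by (simp add: field_simps)
        qed
        define d where "d = complex_of_real (c/4)"
        define mc where "mc = lc + d"
        have cmc: "cnj mc = mc" unfolding mc_def lc_def d_def by simp
        have cmd: "cmod d = c/4" unfolding d_def using c0 by (simp only: norm_of_real)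
        have Smu: "A x - scl mc x = (A x - scl lc x) - scl d x" for x
          unfolding mc_def by (simp add: vs.scale_left_distrib algebra_simps)
        have lbm: "(3*c/4) * nr x \<le> nr (A x - scl mc x)" if x: "x \<in> D" for x
        proof -
          have "nr (A x - scl lc x) - nr (scl d x) \<le> nr (A x - scl mc x)" unfolding Smu by (rule nr_diff_ge)
          thus ?thesis using lbl[OF x] unfolding nr_scl cmd by simp
        qed
        have nsm: "mc \<notin> op_spectrum scl ip D A"
        proof (rule not_spec[of "3*c/4"])
          show "3*c/4 > 0" using c0 by simp
          show "\<And>x. x \<in> D \<Longrightarrow> (3*c/4) * nr x \<le> nr (A x - scl mc x)" by (rule lbm)
          show "y = 0" if "y \<in> D" "A y = scl (cnj mc) y" for y
          proof -
            have "(3*c/4) * nr y \<le> 0" using lbm[OF that(1)] that(2) cmc by simp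
            hence "nr y = 0" using c0 nr_ge0[of y] by (simp add: mult_le_0_iff)
            thus ?thesis by simp
          qed
        qed
        define m where "m = l + c/4"
        have mcm: "mc = complex_of_real m" unfolding mc_def lc_def d_def m_def by simp
        define Rm where "Rm = the_inv_into D (\<lambda>x. scl mc x - A x)"
        note RMF = R_facts[OF nsm, folded Rm_def]
        have RmD: "\<And>y. Rm y \<in> D" and RmS: "\<And>y. scl mc (Rm y) - A (Rm y) = y" using RMF(1,2) by auto
        have zl: "ip (Rl (B x)) (B x) = 0" for x using ZF[OF nsl, of x] unfolding Rl_def lc_def .
        have zm: "ip (Rm (B x)) (B x) = 0" for x using ZF[OF nsm[unfolded mcm], of x] unfolding Rm_def mcm .
        have "B x = 0" for x
        proof -
          define y where "y = B x"
          define u where "u = Rl y"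
          define v where "v = Rm y"
          have uD: "u \<in> D" and vD: "v \<in> D" unfolding u_def v_def using RlD RmD by auto
          have Suv: "scl mc (u - v) - A (u - v) = scl d u"
          proof -
            have "scl mc (u - v) - A (u - v) = (scl mc u - A u) - (scl mc v - A v)"
              using Adiff[OF uD vD] by (simp add: vs.scale_right_diff_distrib algebra_simps)
            also have "... = (scl lc u - A u) + scl d u - y"
            proof -
              have e1: "scl mc v - A v = y" unfolding v_def by (rule RmS)
              have e2: "scl mc u = scl lc u + scl d u" unfolding mc_def by (rule vs.scale_left_distrib)
              show ?thesis unfolding e1 e2 by (simp add: algebra_simps)
            qed
            also have "... = scl d u" unfolding u_def using RlS[of y] by simp
            finally show ?thesis .
          qed
          have "d * ip u v = ip (scl d u) v" by (simp add: ip_scl1)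
          also have "... = ip (u - v) (scl mc v - A v)" unfolding Suv[symmetric]
            by (rule Ssym[OF cmc Ddiff[OF uD vD] vD])
          also have "... = ip (u - v) y" unfolding v_def using RmS[of y] by simp
          also have "... = 0" unfolding u_def v_def y_def using zl zm by (simp add: ip_diff1)
          finally have "d * ip u v = 0" .
          moreover have "d \<noteq> 0" unfolding d_def using c0 by simp
          ultimately have uv: "ip u v = 0" by simp
          have "(3*c/4) * nr (u - v) \<le> (c/4) * nr u"
            using lbm[OF Ddiff[OF uD vD]] nr_commute[of "A (u - v)" "scl mc (u - v)"] Suv nr_scl cmd by simp
          hence nuv: "nr (u - v) \<le> nr u / 3" using c0 by (simp add: field_simps)
          have "(nr u)^2 = Re (ip u (u - v))" using uv by (simp add: ip_diff2 nr_sq)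
          also have "... \<le> cmod (ip u (u - v))" by (rule complex_Re_le_cmod)
          also have "... \<le> nr u * nr (u - v)" by (rule cs)
          also have "... \<le> nr u * (nr u / 3)" using nuv by (intro mult_left_mono) auto
          finally have "(nr u)^2 \<le> (nr u)^2 / 3" by (simp add: power2_eq_square)
          hence "nr u = 0" by simp
          hence "u = 0" by simp
          hence "y = scl lc 0 - A 0" using RlS[of y] unfolding u_def by simp
          thus ?thesis unfolding y_def using A0 by simp
        qed
        thus False using xb by blast
      qed
    qed
    show ?thesis using sub1 sub2 by blast
  qed
qed


end
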